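(* Let $\theta\in\Theta$ and $\lambda\in[0,1]$. For any $\theta'\in\Theta$ with $\|\theta-\theta'\|_2\le\frac{0.1\lambda}{G}$, any $0.4\lambda$-dominant set at $\theta$ is also a $0.2\lambda$-dominant set at $\theta'$.
   Context: $\Theta\subset\mathbb{R}^n$; $\ell:\Theta\times\mathcal Z\to[0,1]$ is $G$-Lipschitz in its first argument ($|\ell(\theta,z)-\ell(\theta',z)|\le G\|\theta-\theta'\|_2$); there are $K$ distributions $\mathcal P_i$ on $\mathcal Z$ and $R_i(\theta)=\mathbb E_{z\sim\mathcal P_i}\ell(\theta,z)$. For $\mu\ge0$, a nonempty $S\subseteq[K]$ is $\mu$-dominant at $\theta$ if $\min_{i\in S}R_i(\theta)\ge R_j(\theta)+\mu$ for all $j\in[K]\setminus S$. *)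

theory Defs
  imports "HOL-Probability.Probability"
begin

definition risk :: "(nat \<Rightarrow> 'z measure) \<Rightarrow> ('p \<Rightarrow> 'z \<Rightarrow> real) \<Rightarrow> nat \<Rightarrow> 'p \<Rightarrow> real" where
  "risk P loss i \<theta> = (\<integral>z. loss \<theta> z \<partial>(P i))"

definition dominant :: "(nat \<Rightarrow> 'p \<Rightarrow> real) \<Rightarrow> nat \<Rightarrow> real \<Rightarrow> nat set \<Rightarrow> 'p \<Rightarrow> bool" where
  "dominant R K \<mu> S \<theta> \<longleftrightarrow>
     S \<noteq> {} \<and> S \<subseteq> {1..K} \<and>
     (\<forall>i\<in>S. \<forall>j\<in>{1..K} - S. R i \<theta> \<ge> R j \<theta> + \<mu>)"

end

theory Submission
  imports Defs
begin

lemma risk_shift: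
  fixes f g :: "'a \<Rightarrow> real" and c :: real
  assumes ps: "prob_space M"
    and mf: "f \<in> borel_measurable M" and mg: "g \<in> borel_measurable M"
    and bf: "\<And>z. f z \<in> {0..1}" and bg: "\<And>z. g z \<in> {0..1}"
    and le: "\<And>z. f z \<le> g z + c"
  shows "(\<integral>z. f z \<partial>M) \<le> (\<integral>z. g z \<partial>M) + c"
proof -
  interpret prob_space M by (rule ps)
  have If: "integrable M f"
  proof (rule integrable_const_bound[where B=1])
    show "AE x in M. norm (f x) \<le> 1" using bf by (auto simp: abs_le_iff)
  qed (rule mf)
  have Ig: "integrable M g"
  proof (rule integrable_const_bound[where B=1])
    show "AE x in M. norm (g x) \<le> 1" using bg by (auto simp: abs_le_iff)
  qed (rule mg)
  have "(\<integral>z. f z \<partial>M) \<le> (\<integral>z. g z + c \<partial>M)"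
    by (rule integral_mono) (use If Ig le in auto)
  also have "\<dots> = (\<integral>z. g z \<partial>M) + c"
    using Ig by (simp add: prob_space)
  finally show ?thesis .
qed

theorem lemmaB8:
  fixes \<Theta> :: "(real ^ 'n) set"
    and loss :: "real ^ 'n \<Rightarrow> 'z \<Rightarrow> real"
    and P :: "nat \<Rightarrow> 'z measure"
    and K :: nat and G lam :: real
    and \<theta> \<theta>' :: "real ^ 'n" and S :: "nat set"
  assumes prob: "\<And>i. i \<in> {1..K} \<Longrightarrow> prob_space (P i)"
    and meas: "\<And>i \<phi>. i \<in> {1..K} \<Longrightarrow> \<phi> \<in> \<Theta> \<Longrightarrow> loss \<phi> \<in> borel_measurable (P i)"
    and range: "\<And>\<phi> z. \<phi> \<in> \<Theta> \<Longrightarrow> loss \<phi> z \<in> {0..1}"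
    and lip: "\<And>\<phi> \<phi>' z. \<phi> \<in> \<Theta> \<Longrightarrow> \<phi>' \<in> \<Theta> \<Longrightarrow> \<bar>loss \<phi> z - loss \<phi>' z\<bar> \<le> G * norm (\<phi> - \<phi>')"
    and \<theta>: "\<theta> \<in> \<Theta>" and \<theta>': "\<theta>' \<in> \<Theta>"
    and lam: "lam \<in> {0..1}"
    and close: "norm (\<theta> - \<theta>') \<le> 0.1 * lam / G"
    and dom: "dominant (risk P loss) K (0.4 * lam) S \<theta>"
  shows "dominant (risk P loss) K (0.2 * lam) S \<theta>'"
proof -
  define c where "c = G * norm (\<theta> - \<theta>')"
  have c: "c \<le> 0.1 * lam"
  proof (cases "G > 0")
    case True
    then show ?thesis using close unfolding c_def by (simp add: field_simps)
  next
    case False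
    have "0.1 * lam / G \<le> 0" using False lam by (simp add: divide_nonneg_nonpos)
    then have "norm (\<theta> - \<theta>') = 0" using close by (meson norm_ge_zero order.trans antisym)
    then show ?thesis using lam unfolding c_def by simp
  qed
  have l1: "loss \<theta> z \<le> loss \<theta>' z + c" for z
    using lip[OF \<theta> \<theta>', of z] unfolding c_def by linarith
  have l2: "loss \<theta>' z \<le> loss \<theta> z + c" for z
    using lip[OF \<theta> \<theta>', of z] unfolding c_def by linarith
  have r1: "risk P loss i \<theta> \<le> risk P loss i \<theta>' + c" if "i \<in> {1..K}" for i
    unfolding risk_def
    by (rule risk_shift[OF prob[OF that] meas[OF that \<theta>] meas[OF that \<theta>'] range[OF \<theta>] range[OF \<theta>'] l1])
  have r2: "risk P loss i \<theta>' \<le> risk P loss i \<theta> + c" if "i \<in> {1..K}" for i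
    unfolding risk_def
    by (rule risk_shift[OF prob[OF that] meas[OF that \<theta>'] meas[OF that \<theta>] range[OF \<theta>'] range[OF \<theta>] l2])
  show ?thesis
    unfolding dominant_def
  proof (intro conjI ballI)
    show "S \<noteq> {}" "S \<subseteq> {1..K}" using dom unfolding dominant_def by auto
    fix i j assume i: "i \<in> S" and j: "j \<in> {1..K} - S"
    have iK: "i \<in> {1..K}" using dom i unfolding dominant_def by auto
    have "risk P loss i \<theta> \<ge> risk P loss j \<theta> + 0.4 * lam"
      using dom i j unfolding dominant_def by auto
    then show "risk P loss i \<theta>' \<ge> risk P loss j \<theta>' + 0.2 * lam"
      using r1[OF iK] r2[of j] j c by auto
  qed
qed

end
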